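(* Let $\epsilon>0$. Then, unconditionally, for every complex $s$ with $\Re(s)>1$, $$\int_0^1 f_\epsilon(u)\,u^{s-1}\,du = \frac{1}{\zeta(1+\epsilon)}\,\frac{1}{s-1} - \frac{1}{\zeta(s+\epsilon)}\,\frac{\zeta(s)}{s}.$$
   Context: $\mu$ is the Möbius function and $\zeta$ the Riemann zeta function. For real $x$, $\{x\}=x-[x]$ denotes the fractional part. For $\epsilon>0$, $f_\epsilon$ is the function on $(0,\infty)$ defined pointwise by $f_\epsilon(t)=\sum_{n=1}^\infty \frac{\mu(n)}{n^\epsilon}\left\{\frac1{nt}\right\}$ (absolutely convergent since $\{1/nt\}\le 1/nt$); it satisfies $|f_\epsilon(t)|\le \zeta(1+\epsilon)/t$. *)

theory Defs
  imports "HOL-Analysis.Analysis" "HOL-Computational_Algebra.Squarefree"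
begin

definition moebius_mu :: "nat \<Rightarrow> real" where
  "moebius_mu n = (if n = 0 \<or> \<not> squarefree n then 0
                   else (-1) ^ card (prime_factors n))"

text \<open>Riemann zeta function in the half-plane Re s > 1, via its Dirichlet series
  (only used there).\<close>
definition zeta :: "complex \<Rightarrow> complex" where
  "zeta s = (\<Sum>n. 1 / (of_nat (Suc n)) powr s)"

definition f_eps :: "real \<Rightarrow> real \<Rightarrow> real" where
  "f_eps \<epsilon> t = (\<Sum>n. moebius_mu (Suc n) / real (Suc n) powr \<epsilon>
                        * frac (1 / (real (Suc n) * t)))"

end

theory Submission
  imports Defs
begin



lemma sum_pow_neg1_Pow:
  assumes "finite S" "S \<noteq> {}"
  shows "(\<Sum>T\<in>Pow S. (-1::real) ^ card T) = 0"
proof -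
  have "card {T. T \<subseteq> S \<and> {} \<subseteq> T \<and> even(card T)} = card {T. T \<subseteq> S \<and> {} \<subseteq> T \<and> odd(card T)}"
    using assms by (intro card_subsupersets_even_odd) auto
  then have "card {T. T \<in> Pow S \<and> even(card T)} = card {T. T \<in> Pow S \<and> odd(card T)}" by simp
  then show ?thesis using assms by (intro sum_alternating_cancels) auto
qed

lemma prod_primes_props:
  fixes S :: "nat set"
  assumes "finite S" "\<And>p. p \<in> S \<Longrightarrow> prime p"
  shows "prime_factors (\<Prod>S) = S" "squarefree (\<Prod>S)"
proof -
  have "0 \<notin> (\<lambda>x. x) ` S" using assms by (auto dest: prime_gt_0_nat)
  then have "prime_factors (\<Prod>S) = \<Union>((prime_factors \<circ> (\<lambda>x. x)) ` S)"
    using prime_factors_prod[OF assms(1), of "\<lambda>x. x"] by simp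
  also have "\<dots> = S" using assms by (auto simp: prime_prime_factors)
  finally show "prime_factors (\<Prod>S) = S" .
  show "squarefree (\<Prod>S)"
    using assms by (intro squarefree_prod_coprime) (auto simp: primes_coprime squarefree_prime)
qed

lemma prod_primes_dvd:
  fixes S :: "nat set"
  assumes "finite S" "\<And>p. p \<in> S \<Longrightarrow> prime p" "\<And>p. p \<in> S \<Longrightarrow> p dvd N"
  shows "\<Prod>S dvd N"
  using assms
proof (induction S rule: finite_induct)
  case (insert x F)
  have "coprime x (\<Prod>F)"
      proof (intro prod_coprime_right)
    fix y assume "y \<in> F"
    then have "x \<noteq> y" "prime x" "prime y" using insert by auto
    then show "coprime x y" using primes_coprime by blast
  qed
  then show ?case using insert by (simp add: divides_mult)
qed simp

lemma squarefree_prod_pf: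
  fixes d :: nat
  assumes "squarefree d"
  shows "\<Prod>(prime_factors d) = d"
proof -
  have d0: "d \<noteq> 0" using assms by (metis not_squarefree_0)
  have "(\<Prod>p \<in> prime_factors d. p ^ multiplicity p d) = d"
    using prod_prime_factors[OF d0] by simp
  moreover have "\<And>p. p \<in> prime_factors d \<Longrightarrow> multiplicity p d = 1"
    using assms d0 squarefree_factorial_semiring' by blast
  ultimately show ?thesis by simp
qed

lemma moebius_divisor_sum:
  fixes N :: nat
  assumes "N > 0"
  shows "(\<Sum>d | d dvd N. moebius_mu d) = (if N = 1 then 1 else 0)"
proof -
  let ?P = "prime_factors N"
  have fin: "finite {d. d dvd N}" using assms by simp
  have "(\<Sum>d | d dvd N. moebius_mu d) = (\<Sum>d | d dvd N \<and> squarefree d. moebius_mu d)"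
    using fin by (intro sum.mono_neutral_right) (auto simp: moebius_mu_def)
  also have "\<dots> = (\<Sum>d | d dvd N \<and> squarefree d. (-1) ^ card (prime_factors d))"
    by (intro sum.cong) (auto simp: moebius_mu_def intro: gr0I)
  also have "\<dots> = (\<Sum>T\<in>Pow ?P. (-1) ^ card T)"
  proof (rule sum.reindex_bij_witness[of _ "\<lambda>T. \<Prod>T" "prime_factors"])
    fix T assume T: "T \<in> Pow ?P"
    then have fT: "finite T" and pT: "\<And>p. p \<in> T \<Longrightarrow> prime p"
      using finite_subset by (auto intro: finite_subset)
    show "prime_factors (\<Prod>T) = T" using prod_primes_props[OF fT pT] by simp
    have "\<Prod>T dvd N" using T fT pT by (intro prod_primes_dvd) auto
    then show "\<Prod>T \<in> {d. d dvd N \<and> squarefree d}"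
      using prod_primes_props[OF fT pT] by simp
  next
    fix d assume d: "d \<in> {d. d dvd N \<and> squarefree d}"
    then show "\<Prod>(prime_factors d) = d" using squarefree_prod_pf by blast
    show "prime_factors d \<in> Pow ?P" using d assms
      by (auto intro: dvd_trans simp: prime_factors_dvd)
    show "(-1) ^ card (prime_factors d) = (-1::real) ^ card (prime_factors d)" by simp
  qed
  also have "\<dots> = (if N = 1 then 1 else 0)"
  proof (cases "N = 1")
    case False
    then obtain p where "prime p" "p dvd N" using prime_factor_nat by blast
    then have "p \<in> ?P" using assms by (intro prime_factorsI) auto
    then have "?P \<noteq> {}" by blast
    then show ?thesis using sum_pow_neg1_Pow[of ?P] False by simp
  qed simp
  finally show ?thesis .
qed


lemma has_sum_shift:
  fixes f :: "nat \<Rightarrow> 'a::banach"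
  assumes "summable (\<lambda>n. norm (f (Suc n)))" "(\<lambda>n. f (Suc n)) sums S"
  shows "(f has_sum S) {0<..}"
proof -
  have "((\<lambda>n. f (Suc n)) has_sum S) UNIV"
    using assms by (rule norm_summable_imp_has_sum)
  then have "(f has_sum S) (Suc ` UNIV)"
    by (subst has_sum_reindex) (auto simp: o_def)
  then show ?thesis by (simp add: greaterThan_0)
qed

lemma norm_nat_powr: "norm (of_nat n powr w :: complex) = real n powr Re w"
  by (subst norm_powr_real_powr) auto

lemma summable_nat_powr:
  assumes "Re w > 1"
  shows "summable (\<lambda>n. norm (1 / of_nat (Suc n) powr w :: complex))"
proof -
  have "summable (\<lambda>n. real n powr (- Re w))"
    using assms by (subst summable_real_powr_iff) auto
  then have "summable (\<lambda>n. real (Suc n) powr (- Re w))"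
    by (subst summable_Suc_iff)
  moreover have "norm (1 / of_nat (Suc n) powr w :: complex) = real (Suc n) powr (- Re w)" for n
    by (simp only: norm_divide norm_one norm_nat_powr powr_minus_divide)
  ultimately show ?thesis by simp
qed

lemma moebius_abs_le: "\<bar>moebius_mu n\<bar> \<le> 1"
  by (auto simp: moebius_mu_def)

lemma zeta_has_sum:
  assumes "Re w > 1"
  shows "((\<lambda>m. 1 / of_nat m powr w :: complex) has_sum zeta w) {0<..}"
  using summable_nat_powr[OF assms] 
  by (intro has_sum_shift) (auto simp: zeta_def intro!: summable_sums summable_norm_cancel)


lemma moebius_has_sum:
  assumes w: "Re w > 1"
  shows "((\<lambda>n. of_real (moebius_mu n) / of_nat n powr w :: complex) has_sum (1 / zeta w)) {0<..}"
proof -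
  define P :: "nat set" where "P = {0<..}"
  define a where "a n = (of_real (moebius_mu n) / of_nat n powr w :: complex)" for n
  define b where "b m = (1 / of_nat m powr w :: complex)" for m
  define Z where "Z = zeta w"
  have bs: "(b has_sum Z) P" unfolding b_def Z_def P_def using zeta_has_sum[OF w] .
  then have "b summable_on P" by (auto simp: summable_on_def)
  then have b_abs: "(\<lambda>m. norm (b m)) summable_on P"
    by (simp add: summable_on_iff_abs_summable_on_complex)
  have "norm (a n) \<le> norm (b n)" for n
    unfolding a_def b_def using moebius_abs_le[of n]
    by (simp add: norm_divide divide_right_mono)
  then have a_abs: "(\<lambda>n. norm (a n)) summable_on P"
    by (intro Infinite_Sum.abs_summable_on_comparison_test'[OF b_abs]) auto
  then have "a summable_on P" by (simp add: summable_on_iff_abs_summable_on_complex)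
  then obtain A where as: "(a has_sum A) P"
    by (auto simp: summable_on_def)
  have sumSig: "(\<lambda>(n,m). a n * b m) summable_on (P \<times> P)"
  proof -
    have "(\<lambda>x. norm ((\<lambda>(n,m). a n * b m) x)) summable_on Sigma P (\<lambda>_. P)"
    proof (subst Infinite_Sum.abs_summable_on_Sigma_iff, intro conjI ballI)
      fix n assume "n \<in> P"
      show "(\<lambda>m. norm ((\<lambda>(n,m). a n * b m) (n, m))) summable_on P"
        using summable_on_cmult_right[OF b_abs, of "norm (a n)"] by (simp add: norm_mult)
    next
      have "(\<lambda>n. norm (a n) * (\<Sum>\<^sub>\<infinity>m\<in>P. norm (b m))) summable_on P"
        by (intro summable_on_cmult_left a_abs)
      moreover have "norm (\<Sum>\<^sub>\<infinity>y\<in>P. norm ((\<lambda>(n,m). a n * b m) (x, y))) = norm (a x) * (\<Sum>\<^sub>\<infinity>m\<in>P. norm (b m))" for x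
        by (simp add: norm_mult infsum_cmult_right' infsum_nonneg)
      ultimately show "(\<lambda>x. norm (\<Sum>\<^sub>\<infinity>y\<in>P. norm ((\<lambda>(n,m). a n * b m) (x, y)))) summable_on P"
        by simp
    qed
    then show ?thesis by (simp add: summable_on_iff_abs_summable_on_complex)
  qed
  have prodsum: "((\<lambda>(n,m). a n * b m) has_sum A * Z) (P \<times> P)"
  proof (rule has_sum_SigmaI[where g = "\<lambda>n. a n * Z"])
    show "((\<lambda>y. (\<lambda>(n,m). a n * b m) (x, y)) has_sum a x * Z) P" for x
      using has_sum_cmult_right[OF bs, of "a x"] by simp
    show "((\<lambda>n. a n * Z) has_sum A * Z) P" using has_sum_cmult_left[OF as] .
    show "(\<lambda>(n,m). a n * b m) summable_on Sigma P (\<lambda>_. P)" using sumSig by simp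
  qed
  define T where "T = Sigma P (\<lambda>N. {d. d dvd N})"
  define h where "h = (\<lambda>(N,d). a d * b (N div d))"
  have "((\<lambda>(n,m). a n * b m) has_sum A * Z) (P \<times> P) = (h has_sum A * Z) T"
  proof (rule has_sum_reindex_bij_witness[where j = "\<lambda>(n,m). (n*m, n)" and i = "\<lambda>(N,d). (d, N div d)"])
    show "(case case x of (n, m) \<Rightarrow> (n * m, n) of (N, d) \<Rightarrow> (d, N div d)) = x" if "x \<in> P \<times> P" for x
      using that by (auto simp: P_def)
    show "(case x of (n, m) \<Rightarrow> (n * m, n)) \<in> T" if "x \<in> P \<times> P" for x
      using that by (auto simp: P_def T_def)
    show "(case case y of (N, d) \<Rightarrow> (d, N div d) of (n, m) \<Rightarrow> (n * m, n)) = y" if "y \<in> T" for y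
      using that by (auto simp: P_def T_def)
    show "(case y of (N, d) \<Rightarrow> (d, N div d)) \<in> P \<times> P" if "y \<in> T" for y
      using that by (auto simp: P_def T_def intro!: gr0I dest: dvd_div_eq_0_iff)
    show "h (case x of (n, m) \<Rightarrow> (n * m, n)) = (case x of (n, m) \<Rightarrow> a n * b m)" if "x \<in> P \<times> P" for x
      using that by (auto simp: P_def h_def)
  qed simp
  with prodsum have hs: "(h has_sum A * Z) T" by simp
  have inner: "((\<lambda>d. h (N, d)) has_sum (if N = 1 then 1 else 0)) {d. d dvd N}" if N: "N \<in> P" for N
  proof -
    have "h (N, d) = of_real (moebius_mu d) / of_nat N powr w" if "d dvd N" for d
    proof -
      have "of_nat N = (of_nat d * of_nat (N div d) :: complex)"
        using that by (metis dvd_mult_div_cancel of_nat_mult)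
      then have "(of_nat N powr w :: complex) = of_nat d powr w * of_nat (N div d) powr w"
        by (simp add: powr_times_real)
      then show ?thesis by (simp add: h_def a_def b_def)
    qed
    then have "((\<lambda>d. h (N, d)) has_sum (\<Sum>d | d dvd N. of_real (moebius_mu d) / of_nat N powr w)) {d. d dvd N}"
      using N by (subst has_sum_cong[where g = "\<lambda>d. of_real (moebius_mu d) / of_nat N powr w"])
                 (auto simp: P_def)
    moreover have "(\<Sum>d | d dvd N. of_real (moebius_mu d) / of_nat N powr w :: complex)
        = of_real (\<Sum>d | d dvd N. moebius_mu d) / of_nat N powr w"
      by (simp add: sum_divide_distrib)
    moreover have "\<dots> = (if N = 1 then 1 else 0)"
      using N moebius_divisor_sum[of N] by (auto simp: P_def)
    ultimately show ?thesis by simp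
  qed
  have "((\<lambda>N. if N = 1 then 1 else 0) has_sum A * Z) P"
    using has_sum_SigmaD[OF hs[unfolded T_def] inner] .
  moreover have "((\<lambda>N. if N = 1 then 1 else 0 :: complex) has_sum 1) P"
    by (rule has_sum_finite_neutralI[where B = "{1}"]) (auto simp: P_def)
  ultimately have AZ: "A * Z = 1" using has_sum_unique by blast
  then have "Z \<noteq> 0" by auto
  with AZ have "A = 1 / Z" by (simp add: eq_divide_eq)
  then show ?thesis using as unfolding a_def P_def Z_def by simp
qed



lemma cpow_has_integral:
  fixes z :: complex
  assumes z: "Re z > -1" and c: "c \<ge> 0"
  shows "((\<lambda>u. of_real u powr z) has_integral (of_real c powr (z+1) / (z+1))) {0..c}"
proof -
  have z1: "z + 1 \<noteq> 0" using z by (auto simp: complex_eq_iff)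
  define F where "F u = of_real u powr (z+1) / (z+1)" for u :: real
  have "((\<lambda>u. of_real u powr z) has_integral (F c - F 0)) {0..c}"
  proof (rule fundamental_theorem_of_calculus_interior)
    show "0 \<le> c" using c .
    show "continuous_on {0..c} F" unfolding F_def using z z1
      by (intro continuous_intros continuous_on_powr_complex) auto
    fix x assume x: "x \<in> {0<..<c}"
    have nr: "complex_of_real x \<notin> \<real>\<^sub>\<le>\<^sub>0" using x by (auto simp: complex_nonpos_Reals_iff)
    have "((\<lambda>w. w powr (z+1) / (z+1)) has_field_derivative ((z+1) * of_real x powr (z+1-1)) / (z+1)) (at (of_real x))"
      by (intro DERIV_cdivide has_field_derivative_powr nr)
    then have "(F has_vector_derivative ((z+1) * of_real x powr (z+1-1)) / (z+1)) (at x)"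
      unfolding F_def by (rule has_vector_derivative_real_field)
    then show "(F has_vector_derivative of_real x powr z) (at x)" using z1 by simp
  qed
  then show ?thesis by (simp add: F_def)
qed

lemma norm_cpow: "u \<ge> 0 \<Longrightarrow> norm (complex_of_real u powr z) = u powr Re z"
  by (subst norm_powr_real_powr) auto

lemma cpow_abs_integrable:
  fixes z :: complex
  assumes z: "Re z > -1" and c: "c \<ge> 0"
  shows "(\<lambda>u. of_real u powr z) absolutely_integrable_on {0..c}"
proof (rule absolutely_integrable_integrable_bound[where g = "\<lambda>u. u powr Re z"])
  show "norm (of_real u powr z) \<le> u powr Re z" if "u \<in> {0..c}" for u
    using that by (simp add: norm_cpow)
  show "(\<lambda>u. of_real u powr z) integrable_on {0..c}"
    using cpow_has_integral[OF assms] by blast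
  show "(\<lambda>u. u powr Re z) integrable_on {0..c}"
    using has_integral_powr_from_0[OF z c] by blast
qed

lemma has_integral_series:
  fixes f :: "nat \<Rightarrow> real \<Rightarrow> complex"
  assumes ai: "\<And>n. f n absolutely_integrable_on S"
    and hi: "\<And>n. (f n has_integral I n) S"
    and ps: "\<And>x. x \<in> S \<Longrightarrow> summable (\<lambda>n. norm (f n x))"
    and ns: "summable (\<lambda>n. integral S (\<lambda>x. norm (f n x)))"
  shows "((\<lambda>x. \<Sum>n. f n x) has_integral (\<Sum>n. I n)) S"
proof -
  define g where "g n x = indicator S x *\<^sub>R f n x" for n x
  have gi: "integrable lebesgue (g n)" for n
    using ai[of n] unfolding set_integrable_def g_def by simp
  have gs: "AE x in lebesgue. summable (\<lambda>n. norm (g n x))"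
    using ps by (intro AE_I2) (auto simp: g_def indicator_def)
  have "(\<integral>x. norm (g n x) \<partial>lebesgue) = integral S (\<lambda>x. norm (f n x))" for n
  proof -
    have "set_integrable lebesgue S (\<lambda>x. norm (f n x))"
      using absolutely_integrable_norm[OF ai[of n]] by (simp add: o_def)
    then have "(LINT x:S | lebesgue. norm (f n x)) = integral S (\<lambda>x. norm (f n x))"
      by (rule set_lebesgue_integral_eq_integral)
    moreover have "(\<integral>x. norm (g n x) \<partial>lebesgue) = (LINT x:S | lebesgue. norm (f n x))"
      unfolding set_lebesgue_integral_def g_def
      by (intro Bochner_Integration.integral_cong) (auto simp: indicator_def)
    ultimately show ?thesis by simp
  qed
  with ns have gns: "summable (\<lambda>n. \<integral>x. norm (g n x) \<partial>lebesgue)" by simp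
  have eq: "(\<lambda>x. \<Sum>n. g n x) = (\<lambda>x. indicator S x *\<^sub>R (\<Sum>n. f n x))"
    by (auto simp: g_def indicator_def fun_eq_iff)
  have "integrable lebesgue (\<lambda>x. \<Sum>n. g n x)"
    by (rule integrable_suminf[OF gi gs gns])
  then have SI: "set_integrable lebesgue S (\<lambda>x. \<Sum>n. f n x)"
    by (simp add: eq set_integrable_def)
  have "(\<integral>x. (\<Sum>n. g n x) \<partial>lebesgue) = (\<Sum>n. integral\<^sup>L lebesgue (g n))"
    by (rule integral_suminf[OF gi gs gns])
  moreover have "integral\<^sup>L lebesgue (g n) = I n" for n
  proof -
    have "integral\<^sup>L lebesgue (g n) = (LINT x:S | lebesgue. f n x)"
      unfolding set_lebesgue_integral_def by (simp add: g_def[abs_def])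
    also have "\<dots> = integral S (f n)" using ai[of n] by (rule set_lebesgue_integral_eq_integral)
    also have "\<dots> = I n" using hi[of n] by (rule integral_unique)
    finally show ?thesis .
  qed
  ultimately have "(LINT x:S | lebesgue. (\<Sum>n. f n x)) = (\<Sum>n. I n)"
    by (simp add: set_lebesgue_integral_def eq)
  with has_integral_set_lebesgue[OF SI] show ?thesis by simp
qed



lemma floor_sum:
  assumes X: "X > 0"
  shows "(\<lambda>k. if real (Suc k) \<le> X then (x::complex) else 0) sums (of_int \<lfloor>X\<rfloor> * x)"
proof -
  have eq: "(real (Suc k) \<le> X) = (k \<in> {..< nat \<lfloor>X\<rfloor>})" for k
  proof -
    have "(real (Suc k) \<le> X) = (int (Suc k) \<le> \<lfloor>X\<rfloor>)" by (simp add: le_floor_iff)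
    also have "\<dots> = (k < nat \<lfloor>X\<rfloor>)" by linarith
    finally show ?thesis by simp
  qed
  have s1: "(\<lambda>k. if k \<in> {..< nat \<lfloor>X\<rfloor>} then x else 0) sums (\<Sum>k\<in>{..< nat \<lfloor>X\<rfloor>}. x)"
    by (rule sums_If_finite_set) simp
  have s2: "(\<Sum>k\<in>{..< nat \<lfloor>X\<rfloor>}. x) = of_int \<lfloor>X\<rfloor> * x"
  proof -
    have "\<lfloor>X\<rfloor> \<ge> 0" using X by simp
    then show ?thesis by (simp add: of_nat_nat)
  qed
  have s3: "(\<lambda>k. if real (Suc k) \<le> X then x else 0) = (\<lambda>k. if k \<in> {..< nat \<lfloor>X\<rfloor>} then x else 0)"
    using eq by presburger
  show ?thesis using s1 by (simp only: s2 s3)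
qed

lemma cpow_real_mult:
  assumes "a \<ge> 0" "b \<ge> 0"
  shows "complex_of_real (a * b) powr s = of_real a powr s * of_real b powr s"
  using assms by (simp only: of_real_mult, intro powr_times_real) auto

lemma cpow_real_inv:
  assumes "a > 0"
  shows "complex_of_real (1 / a) powr s = 1 / of_real a powr s"
proof -
  have "of_real a powr s * of_real (1/a) powr s = complex_of_real (a * (1/a)) powr s"
    by (rule cpow_real_mult[symmetric]) (use assms in auto)
  also have "\<dots> = 1" using assms by simp
  finally have "of_real a powr s * of_real (1/a) powr s = 1" .
  moreover have "complex_of_real a powr s \<noteq> 0" using assms by simp
  ultimately show ?thesis by (simp add: field_simps)
qed

lemma cpow_inv_mult:
  assumes "a > 0" "b > 0"
  shows "complex_of_real (1 / (a * b)) powr s = 1 / (of_real a powr s) * (1 / (of_real b powr s))"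
  using assms by (simp only: cpow_real_inv mult_pos_pos cpow_real_mult) (auto simp: cpow_real_mult)




lemma cond_eq:
  assumes "u > 0" "m > 0"
  shows "(u \<in> {0..1 / (real m * real (Suc k))}) = (real (Suc k) \<le> 1 / (real m * u))"
proof -
  have p1: "real m * real (Suc k) > 0" "real m * u > 0" using assms by auto
  have "(u \<in> {0..1 / (real m * real (Suc k))}) = (u * (real m * real (Suc k)) \<le> 1)"
    using assms p1 by (simp add: pos_le_divide_eq)
  also have "\<dots> = (real (Suc k) * (real m * u) \<le> 1)" by (simp add: ac_simps)
  also have "\<dots> = (real (Suc k) \<le> 1 / (real m * u))" using p1 by (simp add: pos_le_divide_eq)
  finally show ?thesis .
qed

lemma zeta_sums:
  assumes "Re s > 1"
  shows "(\<lambda>k. 1 / of_nat (Suc k) powr s) sums zeta s"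
  unfolding zeta_def using summable_nat_powr[OF assms]
  by (intro summable_sums) (rule summable_norm_cancel)

lemma In_has_integral:
  fixes s :: complex and m :: nat
  assumes m: "m > 0" and s: "Re s > 1"
  shows "((\<lambda>u. complex_of_real (frac (1 / (real m * u))) * of_real u powr (s-1)) has_integral
           (1 / (of_nat m * (s-1)) - 1 / of_nat m powr s * (zeta s / s))) {0..1}"
proof -
  define c where "c k = 1 / (real m * real (Suc k))" for k
  have cpos: "c k > 0" for k using m by (simp add: c_def)
  have cle: "c k \<le> 1" for k
  proof -
    have "(1::nat) \<le> m * Suc k" using m by (simp add: Suc_le_eq)
    then have "1 \<le> real m * real (Suc k)" by (metis of_nat_1 of_nat_le_iff of_nat_mult)
    then show ?thesis by (simp add: c_def divide_le_eq_1)
  qed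
  define h where "h k u = (if u \<in> {0..c k} then complex_of_real u powr (s-1) else 0)" for k u
  have hint: "(h k has_integral (of_real (c k) powr s / s)) {0..1}" for k
  proof -
    have "((\<lambda>u. complex_of_real u powr (s-1)) has_integral (of_real (c k) powr (s - 1 + 1) / (s - 1 + 1))) {0..c k}"
      using s cpos[of k] by (intro cpow_has_integral) auto
    then have "((\<lambda>u. complex_of_real u powr (s-1)) has_integral (of_real (c k) powr s / s)) {0..c k}"
      by simp
    then show ?thesis unfolding h_def[abs_def] using cle[of k] by (subst has_integral_restrict) auto
  qed
  have habs: "h k absolutely_integrable_on {0..1}" for k
  proof (rule absolutely_integrable_integrable_bound[where g = "\<lambda>u. u powr (Re s - 1)"])
    show "norm (h k u) \<le> u powr (Re s - 1)" if "u \<in> {0..1}" for u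
      using that by (auto simp: h_def norm_cpow)
    show "h k integrable_on {0..1}" using hint by blast
    show "(\<lambda>u. u powr (Re s - 1)) integrable_on {0..1}"
      using has_integral_powr_from_0[of "Re s - 1" 1] s by auto
  qed
  have hnorm: "integral {0..1} (\<lambda>u. norm (h k u)) = c k powr Re s / Re s" for k
  proof -
    have "((\<lambda>u. u powr (Re s - 1)) has_integral (c k powr (Re s - 1 + 1) / (Re s - 1 + 1))) {0..c k}"
      using s cpos[of k] by (intro has_integral_powr_from_0) auto
    then have A: "((\<lambda>u. if u \<in> {0..c k} then u powr (Re s - 1) else 0) has_integral (c k powr Re s / Re s)) {0..1}"
      using cle[of k] by (subst has_integral_restrict) auto
    have B: "norm (h k u) = (if u \<in> {0..c k} then u powr (Re s - 1) else 0)" if "u \<in> {0..1}" for u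
      using that by (auto simp: h_def norm_cpow)
    have "((\<lambda>u. norm (h k u)) has_integral (c k powr Re s / Re s)) {0..1}"
      by (rule has_integral_spike_finite[OF finite.emptyI _ A]) (use B in auto)
    then show ?thesis by (rule integral_unique)
  qed
  have ns: "summable (\<lambda>k. integral {0..1} (\<lambda>u. norm (h k u)))"
  proof -
    have "summable (\<lambda>k. real k powr (- Re s))"
      using s by (subst summable_real_powr_iff) auto
    then have "summable (\<lambda>k. real (Suc k) powr (- Re s))"
      by (subst summable_Suc_iff)
    then have G1: "summable (\<lambda>k. real (Suc k) powr (- Re s) / Re s)"
      by (rule summable_divide)
    have G2: "norm (c k powr Re s / Re s) \<le> real (Suc k) powr (- Re s) / Re s" for k
    proof -
      have "real (Suc k) \<le> real m * real (Suc k)" using m by simp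
      then have "c k \<le> 1 / real (Suc k)" unfolding c_def
        by (intro divide_left_mono) (use m in auto)
      then have "c k powr Re s \<le> (1 / real (Suc k)) powr Re s"
        using cpos[of k] s by (intro powr_mono2) auto
      also have "\<dots> = 1 / real (Suc k) powr Re s" by (subst powr_divide) auto
      also have "\<dots> = real (Suc k) powr (- Re s)" by (simp only: powr_minus_divide)
      finally show ?thesis using s cpos[of k] by (simp add: divide_right_mono)
    qed
    show ?thesis unfolding hnorm
      by (rule summable_comparison_test'[where N = 0, OF G1]) (use G2 in auto)
  qed
  have hsum: "(\<lambda>k. h k u) sums (of_int \<lfloor>1 / (real m * u)\<rfloor> * complex_of_real u powr (s-1))"
    if u: "u > 0" for u
  proof -
    have "(\<lambda>k. h k u) = (\<lambda>k. if real (Suc k) \<le> 1 / (real m * u) then complex_of_real u powr (s-1) else 0)"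
      using cond_eq[OF u m] by (auto simp: h_def c_def fun_eq_iff)
    moreover have "1 / (real m * u) > 0" using u m by simp
    ultimately show ?thesis using floor_sum by simp
  qed
  have ps: "summable (\<lambda>k. norm (h k u))" if "u \<in> {0..1}" for u
  proof (cases "u = 0")
    case True
    then show ?thesis using less_imp_le[OF cpos] by (simp add: h_def)
  next
    case False
    with that have u: "u > 0" by simp
    have "(\<lambda>k. of_real (norm (h k u)) :: complex) = (\<lambda>k. if real (Suc k) \<le> 1 / (real m * u) then complex_of_real (norm (complex_of_real u powr (s-1))) else 0)"
      using cond_eq[OF u m] by (auto simp: h_def c_def fun_eq_iff)
    moreover have "1 / (real m * u) > 0" using u m by simp
    ultimately have "summable (\<lambda>k. of_real (norm (h k u)) :: complex)"
      using floor_sum sums_summable by metis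
    from summable_Re[OF this] show ?thesis by simp
  qed
  have I1: "((\<lambda>u. \<Sum>k. h k u) has_integral (\<Sum>k. of_real (c k) powr s / s)) {0..1}"
    by (rule has_integral_series[OF habs hint ps ns])
  have csum: "(\<Sum>k. of_real (c k) powr s / s) = 1 / of_nat m powr s * (zeta s / s)"
  proof -
    have "of_real (c k) powr s / s = (1 / of_nat m powr s / s) * (1 / of_nat (Suc k) powr s)" for k
      unfolding c_def using m by (subst cpow_inv_mult) auto
    moreover have "(\<lambda>k. (1 / of_nat m powr s / s) * (1 / of_nat (Suc k) powr s)) sums ((1 / of_nat m powr s / s) * zeta s)"
      by (intro sums_mult zeta_sums s)
    ultimately show ?thesis by (simp add: sums_unique[symmetric])
  qed
  have I2: "((\<lambda>u. of_real u powr (s-2) * (1 / of_nat m)) has_integral (1 / (s-1) * (1 / of_nat m))) {0..1}"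
  proof -
    have "((\<lambda>u. complex_of_real u powr (s-2)) has_integral (of_real 1 powr (s - 2 + 1) / (s - 2 + 1))) {0..1}"
      using s by (intro cpow_has_integral) auto
    then have "((\<lambda>u. complex_of_real u powr (s-2)) has_integral (1 / (s-1))) {0..1}"
      by (simp add: algebra_simps)
    then show ?thesis by (rule has_integral_mult_left)
  qed
  have A: "((\<lambda>u. of_real u powr (s-2) * (1 / of_nat m) - (\<Sum>k. h k u)) has_integral
          (1 / (s-1) * (1 / of_nat m) - 1 / of_nat m powr s * (zeta s / s))) {0..1}"
    using has_integral_diff[OF I2 I1] by (simp add: csum)
  have B: "of_real u powr (s-2) * (1 / of_nat m) - (\<Sum>k. h k u) =
      complex_of_real (frac (1 / (real m * u))) * of_real u powr (s-1)" if "u \<in> {0..1}" for u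
  proof (cases "u = 0")
    case True
    then show ?thesis using less_imp_le[OF cpos] by (simp add: h_def)
  next
    case False
    with that have u: "u > 0" by simp
    have "of_real u powr (s-1) = complex_of_real u powr (s-2) * of_real u"
      using powr_add[of "complex_of_real u" "s-2" 1] by simp
    then have "complex_of_real (1 / (real m * u)) * of_real u powr (s-1) = of_real u powr (s-2) * (1 / of_nat m)"
      using u by (simp add: field_simps)
    moreover have "(\<Sum>k. h k u) = of_int \<lfloor>1 / (real m * u)\<rfloor> * complex_of_real u powr (s-1)"
      using hsum[OF u] by (rule sums_unique[symmetric])
    ultimately show ?thesis by (simp add: frac_def algebra_simps)
  qed
  have eqv: "1 / (s-1) * (1 / of_nat m) - 1 / of_nat m powr s * (zeta s / s) = 1 / (of_nat m * (s-1)) - 1 / of_nat m powr s * (zeta s / s)" by simp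
  from A have A': "((\<lambda>u. of_real u powr (s-2) * (1 / of_nat m) - (\<Sum>k. h k u)) has_integral
          (1 / (of_nat m * (s-1)) - 1 / of_nat m powr s * (zeta s / s))) {0..1}" by (simp only: eqv)
  show ?thesis
    by (rule has_integral_spike_finite[OF finite.emptyI _ A']) (use B in auto)
qed




lemma G_bound:
  fixes s :: complex and m :: nat
  assumes m: "m > 0" and u: "u \<in> {0..1}"
  shows "norm (complex_of_real (frac (1 / (real m * u))) * of_real u powr (s-1)) \<le> u powr (Re s - 2) / real m"
proof (cases "u = 0")
  case True
  then show ?thesis by simp
next
  case False
  with u have u0: "u > 0" by simp
  define X where "X = 1 / (real m * u)"
  have X0: "X > 0" using u0 m by (simp add: X_def)
  have fr: "\<bar>frac X\<bar> \<le> X"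
  proof -
    have "\<lfloor>X\<rfloor> \<ge> 0" using X0 by simp
    then show ?thesis using frac_ge_0[of X] by (simp add: frac_def)
  qed
  have "norm (complex_of_real (frac X) * of_real u powr (s-1)) = \<bar>frac X\<bar> * u powr (Re s - 1)"
    using u0 by (simp add: norm_mult norm_cpow)
  also have "\<dots> \<le> X * u powr (Re s - 1)"
    using fr by (intro mult_right_mono) auto
  also have "u powr (Re s - 1) = u powr (Re s - 2) * u"
    using powr_add[of u "Re s - 2" 1] u0 by simp
  also have "X * (u powr (Re s - 2) * u) = u powr (Re s - 2) / real m"
    using u0 m by (simp add: X_def field_simps)
  finally show ?thesis by (simp add: X_def)
qed

lemma In_abs:
  fixes s :: complex and m :: nat
  assumes m: "m > 0" and s: "Re s > 1"
  shows "(\<lambda>u. complex_of_real (frac (1 / (real m * u))) * of_real u powr (s-1)) absolutely_integrable_on {0..1}"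
    and "(\<lambda>u. norm (complex_of_real (frac (1 / (real m * u))) * of_real u powr (s-1))) integrable_on {0..1}"
    and "integral {0..1} (\<lambda>u. norm (complex_of_real (frac (1 / (real m * u))) * of_real u powr (s-1)))
           \<le> 1 / (real m * (Re s - 1))"
proof -
  let ?G = "\<lambda>u. complex_of_real (frac (1 / (real m * u))) * of_real u powr (s-1)"
  have gi: "((\<lambda>u. u powr (Re s - 2) / real m) has_integral (1 powr (Re s - 2 + 1) / (Re s - 2 + 1) / real m)) {0..1}"
    using s by (intro has_integral_divide has_integral_powr_from_0) auto
  have gv: "1 powr (Re s - 2 + 1) / (Re s - 2 + 1) / real m = 1 / (real m * (Re s - 1))"
    by (simp add: field_simps)
  show ab: "?G absolutely_integrable_on {0..1}"
  proof (rule absolutely_integrable_integrable_bound[where g = "\<lambda>u. u powr (Re s - 2) / real m"])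
    show "norm (?G u) \<le> u powr (Re s - 2) / real m" if "u \<in> {0..1}" for u
      using G_bound[OF m that] .
    show "?G integrable_on {0..1}" using In_has_integral[OF m s] by blast
    show "(\<lambda>u. u powr (Re s - 2) / real m) integrable_on {0..1}" using gi by blast
  qed
  then show ni: "(\<lambda>u. norm (?G u)) integrable_on {0..1}"
    by (simp add: absolutely_integrable_on_def)
  have "integral {0..1} (\<lambda>u. norm (?G u)) \<le> integral {0..1} (\<lambda>u. u powr (Re s - 2) / real m)"
    using ni gi G_bound[OF m] by (intro integral_le) auto
  also have "\<dots> = 1 / (real m * (Re s - 1))"
    using integral_unique[OF gi] gv by simp
  finally show "integral {0..1} (\<lambda>u. norm (?G u)) \<le> 1 / (real m * (Re s - 1))" .
qed

lemma summable_inv_powr: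
  assumes e: "e > 0"
  shows "summable (\<lambda>n. 1 / (real (Suc n) powr e * real (Suc n)))"
proof -
  have "summable (\<lambda>n. real n powr (- (1 + e)))"
    using e by (subst summable_real_powr_iff) auto
  then have "summable (\<lambda>n. real (Suc n) powr (- (1 + e)))"
    by (subst summable_Suc_iff)
  moreover have "real (Suc n) powr (- (1 + e)) = 1 / (real (Suc n) powr e * real (Suc n))" for n
  proof -
    have "real (Suc n) powr (1 + e) = real (Suc n) * real (Suc n) powr e"
      using powr_add[of "real (Suc n)" 1 e] by simp
    then show ?thesis by (subst powr_minus_divide) (simp add: mult.commute)
  qed
  ultimately show ?thesis by simp
qed

lemma moebius_sums:
  assumes w: "Re w > 1"
  shows "(\<lambda>n. of_real (moebius_mu (Suc n)) / of_nat (Suc n) powr w :: complex) sums (1 / zeta w)"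
proof -
  have "((\<lambda>n. of_real (moebius_mu n) / of_nat n powr w :: complex) has_sum (1 / zeta w)) (Suc ` UNIV)"
    using moebius_has_sum[OF w] by (simp add: greaterThan_0)
  then have "(((\<lambda>n. of_real (moebius_mu n) / of_nat n powr w :: complex) \<circ> Suc) has_sum (1 / zeta w)) UNIV"
    by (subst (asm) has_sum_reindex) auto
  then show ?thesis by (intro has_sum_imp_sums) (simp add: o_def)
qed

lemma natpow_eps: "(of_nat m :: complex) powr complex_of_real e = complex_of_real (real m powr e)"
  using powr_of_real[of "real m" e] by simp




lemma alg_ident:
  fixes a N P d M z :: complex
  shows "a / (N * P) * (1 / d) - a / (M * P) * z = (a / P) * (1 / (N * d) - 1 / M * z)"
  by (simp add: divide_inverse inverse_mult_distrib algebra_simps)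

theorem mainTheorem4:
  fixes \<epsilon> :: real and s :: complex
  assumes "\<epsilon> > 0" and "Re s > 1"
  shows "((\<lambda>u. complex_of_real (f_eps \<epsilon> u) * complex_of_real u powr (s - 1))
            has_integral
          (1 / zeta (1 + complex_of_real \<epsilon>) * (1 / (s - 1))
           - 1 / zeta (s + complex_of_real \<epsilon>) * (zeta s / s))) {0..1}"
proof -
  have e: "\<epsilon> > 0" and s: "Re s > 1" using assms by auto
  define c where "c n = moebius_mu (Suc n) / real (Suc n) powr \<epsilon>" for n
  define G where "G m u = complex_of_real (frac (1 / (real m * u))) * of_real u powr (s-1)" for m u
  define f where "f n u = complex_of_real (c n) * G (Suc n) u" for n u
  define I where "I n = complex_of_real (c n) * (1 / (of_nat (Suc n) * (s-1)) - 1 / of_nat (Suc n) powr s * (zeta s / s))" for n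
  define b where "b n = 1 / (real (Suc n) powr \<epsilon> * real (Suc n))" for n
  have bs: "summable b" unfolding b_def using summable_inv_powr[OF e] .
  have cb: "\<bar>c n\<bar> \<le> 1 / real (Suc n) powr \<epsilon>" for n
    unfolding c_def using moebius_abs_le[of "Suc n"] by (simp add: abs_div divide_right_mono)
  have ai: "f n absolutely_integrable_on {0..1}" for n
    unfolding f_def[abs_def] G_def[abs_def]
    by (intro set_integrable_mult_right In_abs(1)) (use s in auto)
  have hi: "(f n has_integral I n) {0..1}" for n
    unfolding f_def[abs_def] G_def[abs_def] I_def
    by (intro has_integral_mult_right In_has_integral) (use s in auto)
  have fb: "norm (f n u) \<le> u powr (Re s - 2) * b n" if u: "u \<in> {0..1}" for n u
  proof -
    have "norm (f n u) = \<bar>c n\<bar> * norm (G (Suc n) u)" by (simp add: f_def norm_mult)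
    also have "\<dots> \<le> (1 / real (Suc n) powr \<epsilon>) * (u powr (Re s - 2) / real (Suc n))"
      using cb[of n] G_bound[of "Suc n" u s] u unfolding G_def
      by (intro mult_mono) auto
    also have "\<dots> = u powr (Re s - 2) * b n" by (simp add: b_def)
    finally show ?thesis .
  qed
  have ps: "summable (\<lambda>n. norm (f n u))" if u: "u \<in> {0..1}" for u
    by (rule summable_comparison_test'[where N = 0, OF summable_mult[OF bs, of "u powr (Re s - 2)"]])
       (use fb[OF u] in auto)
  have ns: "summable (\<lambda>n. integral {0..1} (\<lambda>u. norm (f n u)))"
  proof (rule summable_comparison_test'[where N = 0, OF summable_mult[OF bs, of "1 / (Re s - 1)"]])
    fix n :: nat
    have nG: "(\<lambda>u. norm (G (Suc n) u)) integrable_on {0..1}"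
      unfolding G_def using In_abs(2)[of "Suc n" s] s by auto
    have eq1: "integral {0..1} (\<lambda>u. norm (f n u)) = \<bar>c n\<bar> * integral {0..1} (\<lambda>u. norm (G (Suc n) u))"
      by (simp add: f_def norm_mult)
    have nn: "0 \<le> integral {0..1} (\<lambda>u. norm (G (Suc n) u))"
      using nG by (intro integral_nonneg) auto
    have le: "integral {0..1} (\<lambda>u. norm (G (Suc n) u)) \<le> 1 / (real (Suc n) * (Re s - 1))"
      unfolding G_def using In_abs(3)[of "Suc n" s] s by auto
    have "norm (integral {0..1} (\<lambda>u. norm (f n u))) = \<bar>c n\<bar> * integral {0..1} (\<lambda>u. norm (G (Suc n) u))"
      using nn by (simp add: eq1 abs_mult)
    also have "\<dots> \<le> (1 / real (Suc n) powr \<epsilon>) * (1 / (real (Suc n) * (Re s - 1)))"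
      by (rule mult_mono[OF cb le]) (use nn in auto)
    also have "\<dots> = 1 / (Re s - 1) * b n" by (simp add: b_def)
    finally show "norm (integral {0..1} (\<lambda>u. norm (f n u))) \<le> 1 / (Re s - 1) * b n" .
  qed
  have main: "((\<lambda>u. \<Sum>n. f n u) has_integral (\<Sum>n. I n)) {0..1}"
    by (rule has_integral_series[OF ai hi ps ns])
  have ptw: "(\<Sum>n. f n u) = complex_of_real (f_eps \<epsilon> u) * complex_of_real u powr (s - 1)"
    if u: "u \<in> {0..1}" for u
  proof -
    define r where "r n = c n * frac (1 / (real (Suc n) * u))" for n
    have "summable r"
    proof (cases "u = 0")
      case True
      then show ?thesis by (simp add: r_def[abs_def])
    next
      case False
      with u have u0: "u > 0" by simp
      have "norm (r n) \<le> 1 / u * b n" for n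
      proof -
        define X where "X = 1 / (real (Suc n) * u)"
        have X0: "X > 0" using u0 by (simp add: X_def)
        have fr: "\<bar>frac X\<bar> \<le> X"
        proof -
          have "\<lfloor>X\<rfloor> \<ge> 0" using X0 by simp
          then show ?thesis using frac_ge_0[of X] by (simp add: frac_def)
        qed
        have "norm (r n) = \<bar>c n\<bar> * \<bar>frac X\<bar>" by (simp add: r_def X_def abs_mult)
        also have "\<dots> \<le> (1 / real (Suc n) powr \<epsilon>) * X"
          using cb[of n] fr by (intro mult_mono) auto
        also have "\<dots> = 1 / u * b n" using u0 by (simp add: X_def b_def field_simps)
        finally show ?thesis .
      qed
      then show ?thesis
        by (intro summable_comparison_test'[where N = 0, OF summable_mult[OF bs, of "1 / u"]]) auto
    qed
    then have "r sums f_eps \<epsilon> u"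
      unfolding f_eps_def r_def c_def by (intro summable_sums) simp
    then have "(\<lambda>n. complex_of_real (r n) * complex_of_real u powr (s - 1)) sums
                 (complex_of_real (f_eps \<epsilon> u) * complex_of_real u powr (s - 1))"
      by (intro sums_mult2 sums_of_real)
    moreover have "complex_of_real (r n) * complex_of_real u powr (s - 1) = f n u" for n
      by (simp add: r_def f_def G_def)
    ultimately show ?thesis by (simp add: sums_unique[symmetric])
  qed
  have Isum: "(\<Sum>n. I n) = 1 / zeta (1 + complex_of_real \<epsilon>) * (1 / (s - 1))
           - 1 / zeta (s + complex_of_real \<epsilon>) * (zeta s / s)"
  proof -
    have w1: "Re (1 + complex_of_real \<epsilon>) > 1" using e by simp
    have w2: "Re (s + complex_of_real \<epsilon>) > 1" using e s by simp
    note S1 = moebius_sums[OF w1]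
    note S2 = moebius_sums[OF w2]
    have "(\<lambda>n. of_real (moebius_mu (Suc n)) / of_nat (Suc n) powr (1 + complex_of_real \<epsilon>) * (1 / (s - 1))
              - of_real (moebius_mu (Suc n)) / of_nat (Suc n) powr (s + complex_of_real \<epsilon>) * (zeta s / s))
          sums (1 / zeta (1 + complex_of_real \<epsilon>) * (1 / (s - 1))
           - 1 / zeta (s + complex_of_real \<epsilon>) * (zeta s / s))"
      by (intro sums_diff sums_mult2 S1 S2)
    moreover have "of_real (moebius_mu (Suc n)) / of_nat (Suc n) powr (1 + complex_of_real \<epsilon>) * (1 / (s - 1))
              - of_real (moebius_mu (Suc n)) / of_nat (Suc n) powr (s + complex_of_real \<epsilon>) * (zeta s / s)
          = I n" for n
    proof -
      have q: "(of_nat (Suc n)::complex) powr of_real \<epsilon> = of_real (real (Suc n) powr \<epsilon>)"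
        by (rule natpow_eps)
      have p1: "(of_nat (Suc n) :: complex) powr (1 + complex_of_real \<epsilon>) = of_nat (Suc n) * of_real (real (Suc n) powr \<epsilon>)"
        using powr_add[of "of_nat (Suc n) :: complex" 1 "complex_of_real \<epsilon>"] by (simp only: q powr_to_1)
      have p2: "(of_nat (Suc n) :: complex) powr (s + complex_of_real \<epsilon>) = of_nat (Suc n) powr s * of_real (real (Suc n) powr \<epsilon>)"
        using powr_add[of "of_nat (Suc n) :: complex" s "complex_of_real \<epsilon>"] by (simp only: q)
      show ?thesis unfolding I_def c_def p1 p2 of_real_divide
        by (rule alg_ident)
    qed
    ultimately show ?thesis by (simp add: sums_unique[symmetric])
  qed
  show ?thesis
    by (rule has_integral_spike_finite[OF finite.emptyI _ main[unfolded Isum]]) (use ptw in auto)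
qed


end
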